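(* Let $\hat a,\hat b\in\hat{\mathbb Q}$ and suppose there exist $\hat q,\hat p\in\hat{\mathbb U}$ with $\hat a\hat q=\hat p\hat b$. Suppose $\hat a=\hat x^*\hat\lambda\hat x$ and $\hat b=\hat y^*\hat\mu\hat y$, where $\hat x,\hat y\in\hat{\mathbb U}$ and $\hat\lambda=\lambda_1+\lambda_2\varepsilon$, $\hat\mu=\mu_1+\mu_2\varepsilon\in\mathbb{DC}$ with $\lambda_1,\mu_1\notin\mathbb R$. For $\hat m\in\hat{\mathbb U}$ define $$Q(\hat m)=\hat x^*\,(\overline{\lambda_1}/|\lambda_1|)\big(1-\operatorname{Im}(\lambda_2\overline{\lambda_1}/|\lambda_1|^2)\,i\,\varepsilon\big)\,\hat m\,\hat y,$$ $$P(\hat m)=\hat x^*\,\hat m\,\big(1-\operatorname{Im}(\mu_2\overline{\mu_1}/|\mu_1|^2)\,i\,\varepsilon\big)(\overline{\mu_1}/|\mu_1|)\,\hat y.$$ Then $$\{(\hat q,\hat p)\in\hat{\mathbb U}\times\hat{\mathbb U}:\hat a\hat q=\hat p\hat b\}=\{(Q(\hat m),P(\hat m)):\hat m\in\hat{\mathbb U}\}.$$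
   Context: $\mathbb{Q}$ denotes the real quaternions with units $i,j,k$; complex numbers are identified with quaternions $a+bi$ (so $i$ above is the imaginary unit). $\varepsilon$ satisfies $\varepsilon\ne0$, $\varepsilon^2=0$ and commutes with quaternions. $\hat{\mathbb Q}$ is the set of dual quaternions $\tilde p_{st}+\tilde p_{\mathcal I}\varepsilon$ with quaternions $\tilde p_{st},\tilde p_{\mathcal I}$, conjugate $\hat p^*=\tilde p_{st}^*+\tilde p_{\mathcal I}^*\varepsilon$. $\mathbb{DC}$ is the set of dual complex numbers $a+b\varepsilon$, $a,b\in\mathbb C$. $\hat{\mathbb U}$ is the set of unit dual quaternions, i.e. $\hat p$ with $|\hat p|=1$, where $|\hat p|=|\tilde p_{st}|+\frac{\mathrm{sc}(\tilde p_{st}^*\tilde p_{\mathcal I})}{|\tilde p_{st}|}\varepsilon$ for $\tilde p_{st}\ne0$, $\mathrm{sc}(\tilde p)=\frac12(\tilde p+\tilde p^* )$; equivalently $\hat p^*\hat p=\hat p\hat p^*=1$. $\operatorname{Re},\operatorname{Im}$ are real and imaginary parts of complex numbers. *)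

theory Defs
  imports Complex_Main
begin

datatype quat = Quat (qre: real) (qi: real) (qj: real) (qk: real)

instantiation quat :: ring_1
begin
definition "0 = Quat 0 0 0 0"
definition "1 = Quat 1 0 0 0"
definition "p + q = Quat (qre p + qre q) (qi p + qi q) (qj p + qj q) (qk p + qk q)"
definition "p - q = Quat (qre p - qre q) (qi p - qi q) (qj p - qj q) (qk p - qk q)"
definition "- p = Quat (- qre p) (- qi p) (- qj p) (- qk p)"
definition "p * q = Quat
   (qre p * qre q - qi p * qi q - qj p * qj q - qk p * qk q)
   (qre p * qi q + qi p * qre q + qj p * qk q - qk p * qj q)
   (qre p * qj q - qi p * qk q + qj p * qre q + qk p * qi q)
   (qre p * qk q + qi p * qj q - qj p * qi q + qk p * qre q)"
instance
  by standard (simp_all add: zero_quat_def one_quat_def plus_quat_def minus_quat_def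
      uminus_quat_def times_quat_def algebra_simps quat.expand)
end

definition qcnj :: "quat \<Rightarrow> quat" where
  "qcnj p = Quat (qre p) (- qi p) (- qj p) (- qk p)"

definition quat_of_complex :: "complex \<Rightarrow> quat" where
  "quat_of_complex z = Quat (Re z) (Im z) 0 0"

text \<open>DQ s d stands for s + d eps, with eps squared zero and eps central.\<close>
datatype dquat = DQ (dst: quat) (ddu: quat)

instantiation dquat :: ring_1
begin
definition "0 = DQ 0 0"
definition "1 = DQ 1 0"
definition "p + q = DQ (dst p + dst q) (ddu p + ddu q)"
definition "p - q = DQ (dst p - dst q) (ddu p - ddu q)"
definition "- p = DQ (- dst p) (- ddu p)"
definition "p * q = DQ (dst p * dst q) (dst p * ddu q + ddu p * dst q)"
instance
  by standard (simp_all add: zero_dquat_def one_dquat_def plus_dquat_def minus_dquat_def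
      uminus_dquat_def times_dquat_def algebra_simps dquat.expand)
end

definition dqcnj :: "dquat \<Rightarrow> dquat" where
  "dqcnj p = DQ (qcnj (dst p)) (qcnj (ddu p))"

definition unit_dq :: "dquat \<Rightarrow> bool" where
  "unit_dq p \<longleftrightarrow> dqcnj p * p = 1 \<and> p * dqcnj p = 1"

definition dual_complex :: "complex \<Rightarrow> complex \<Rightarrow> dquat" where
  "dual_complex a b = DQ (quat_of_complex a) (quat_of_complex b)"

end

theory Submission imports Defs begin

lemma qcnj_mult: "qcnj (p * q) = qcnj q * qcnj p"
  by (simp add: qcnj_def times_quat_def algebra_simps)
lemma qcnj_qcnj[simp]: "qcnj (qcnj p) = p" by (simp add: qcnj_def)
lemma qcnj_add: "qcnj (p + q) = qcnj p + qcnj q"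
  by (simp add: qcnj_def plus_quat_def)
lemma dqcnj_mult: "dqcnj (p * q) = dqcnj q * dqcnj p"
  by (simp add: dqcnj_def times_dquat_def qcnj_mult qcnj_add add.commute)
lemma dqcnj_dqcnj[simp]: "dqcnj (dqcnj p) = p" by (simp add: dqcnj_def)

lemma dc_mult: "dual_complex a b * dual_complex c d = dual_complex (a*c) (a*d+b*c)"
  by (simp add: dual_complex_def times_dquat_def quat_of_complex_def times_quat_def plus_quat_def)
lemma dc_one: "1 = dual_complex 1 0"
  by (simp add: dual_complex_def one_dquat_def quat_of_complex_def one_quat_def zero_quat_def)
lemma dc_diff: "dual_complex a b - dual_complex c d = dual_complex (a-c) (b-d)"
  by (simp add: dual_complex_def minus_dquat_def quat_of_complex_def minus_quat_def)
lemma dc_cnj: "dqcnj (dual_complex a b) = dual_complex (cnj a) (cnj b)"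
  by (simp add: dual_complex_def dqcnj_def quat_of_complex_def qcnj_def)
lemma dc_real_comm: "dual_complex (of_real r) (of_real s) * z = z * dual_complex (of_real r) (of_real s)"
  by (cases z) (simp add: dual_complex_def times_dquat_def quat_of_complex_def times_quat_def
     plus_quat_def algebra_simps quat.expand)

lemma cx1: assumes "l \<noteq> 0"
  shows "l * (cnj l / of_real (cmod l)) = of_real (cmod l)"
proof -
  have "l * cnj l = of_real ((cmod l)^2)" by (metis complex_norm_square of_real_power)
  then show ?thesis using assms by (simp add: field_simps power2_eq_square)
qed

lemma cx2: assumes "l \<noteq> 0"
  shows "l * - (cnj l / of_real (cmod l) * (\<i> * of_real (Im (l2 * cnj l / of_real ((cmod l)\<^sup>2)))))
     + l2 * (cnj l / of_real (cmod l)) = of_real (Re (l2 * cnj l) / cmod l)"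
proof -
  define z where "z = l2 * cnj l"
  define n where "n = cmod l"
  have n: "n > 0" using assms by (simp add: n_def)
  have lc: "l * cnj l = of_real (n^2)" unfolding n_def by (metis complex_norm_square of_real_power)
  have "Im (z / of_real (n^2)) = Im z / n^2" by (simp add: Im_divide_of_real)
  have "l * - (cnj l / of_real n * (\<i> * of_real (Im (z / of_real (n^2)))))
        = - (l * cnj l) / of_real n * (\<i> * of_real (Im z / n^2))"
    by (simp add: Im_divide_of_real)
  also have "\<dots> = - \<i> * of_real (Im z) / of_real n" using n by (simp add: lc field_simps power2_eq_square)
  finally have e: "l * - (cnj l / of_real n * (\<i> * of_real (Im (z / of_real (n^2))))) + z / of_real n
     = (z - \<i> * of_real (Im z)) / of_real n" by (simp add: diff_divide_distrib)
  have "z - \<i> * of_real (Im z) = of_real (Re z)" by (simp add: complex_eq_iff)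
  with e have "l * - (cnj l / of_real n * (\<i> * of_real (Im (z / of_real (n^2))))) + z / of_real n
     = of_real (Re z / n)" by simp
  then show ?thesis by (simp add: z_def n_def mult.assoc times_divide_eq_right)
qed

lemma F1: assumes "l \<noteq> 0"
  shows "dual_complex l l2 * (dual_complex (cnj l / of_real (cmod l)) 0
          * (1 - dual_complex 0 (\<i> * of_real (Im (l2 * cnj l / of_real ((cmod l)\<^sup>2))))))
     = dual_complex (of_real (cmod l)) (of_real (Re (l2 * cnj l) / cmod l))"
  unfolding dc_one dc_diff dc_mult using cx1[OF assms] cx2[OF assms, of l2] by simp

lemma F2: assumes "l \<noteq> 0"
  shows "(1 - dual_complex 0 (\<i> * of_real (Im (l2 * cnj l / of_real ((cmod l)\<^sup>2)))))
          * dual_complex (cnj l / of_real (cmod l)) 0 * dual_complex l l2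
     = dual_complex (of_real (cmod l)) (of_real (Re (l2 * cnj l) / cmod l))"
  unfolding dc_one dc_diff dc_mult using cx1[OF assms] cx2[OF assms, of l2] by (simp add: algebra_simps)

lemma F4: "dual_complex l l2 * dqcnj (dual_complex l l2) = dual_complex (of_real ((cmod l)^2)) (of_real (2 * Re (l2 * cnj l)))"
proof -
  have "l * cnj l = of_real ((cmod l)^2)" by (metis complex_norm_square of_real_power)
  moreover have "l * cnj l2 + l2 * cnj l = of_real (2 * Re (l2 * cnj l))"
    by (simp add: complex_eq_iff algebra_simps)
  ultimately show ?thesis unfolding dc_cnj dc_mult by simp
qed

lemma dc_unit: assumes "cnj u * u = 1" "cnj u * v + cnj v * u = 0"
  shows "unit_dq (dual_complex u v)"
  unfolding unit_dq_def dc_cnj dc_mult dc_one using assms by (simp add: algebra_simps)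

lemma dc_inj: "dual_complex a b = dual_complex c d \<Longrightarrow> a = c \<and> b = d"
  by (simp add: dual_complex_def quat_of_complex_def complex_eq_iff)

lemma C_unit: assumes "l \<noteq> 0" shows "unit_dq (dual_complex (cnj l / of_real (cmod l)) 0)"
proof (rule dc_unit)
  have "l * cnj l = of_real ((cmod l)^2)" by (metis complex_norm_square of_real_power)
  then show "cnj (cnj l / complex_of_real (cmod l)) * (cnj l / complex_of_real (cmod l)) = 1"
    using assms by (simp add: field_simps power2_eq_square)
qed simp

lemma E_unit: "unit_dq (1 - dual_complex 0 (\<i> * of_real s))"
  unfolding dc_one dc_diff by (rule dc_unit) (simp_all add: complex_eq_iff)

lemma unit_mult: "unit_dq u \<Longrightarrow> unit_dq v \<Longrightarrow> unit_dq (u * v)"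
  unfolding unit_dq_def dqcnj_mult
  by (metis mult.assoc mult_1_left mult_1_right)

lemma unit_cnj: "unit_dq u \<Longrightarrow> unit_dq (dqcnj u)"
  unfolding unit_dq_def by simp

lemma unit_simps:
  assumes "unit_dq u"
  shows "u * dqcnj u = 1" "dqcnj u * u = 1" "u * (dqcnj u * z) = z" "dqcnj u * (u * z) = z"
  using assms unfolding unit_dq_def by (auto simp: mult.assoc[symmetric])

theorem theorem3p2:
  fixes a b x y :: dquat and l1 l2 m1 m2 :: complex
  assumes ex: "\<exists>q p. unit_dq q \<and> unit_dq p \<and> a * q = p * b"
    and x: "unit_dq x" and y: "unit_dq y"
    and hl1: "l1 \<notin> \<real>" and hm1: "m1 \<notin> \<real>"
    and a: "a = dqcnj x * dual_complex l1 l2 * x"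
    and b: "b = dqcnj y * dual_complex m1 m2 * y"
  defines "Q \<equiv> (\<lambda>m. dqcnj x * dual_complex (cnj l1 / of_real (cmod l1)) 0
                 * (1 - dual_complex 0 (\<i> * of_real (Im (l2 * cnj l1 / of_real ((cmod l1)\<^sup>2)))))
                 * m * y)"
    and "P \<equiv> (\<lambda>m. dqcnj x * m
                 * (1 - dual_complex 0 (\<i> * of_real (Im (m2 * cnj m1 / of_real ((cmod m1)\<^sup>2)))))
                 * dual_complex (cnj m1 / of_real (cmod m1)) 0 * y)"
  shows "{(q, p). unit_dq q \<and> unit_dq p \<and> a * q = p * b} = {(Q m, P m) | m. unit_dq m}"
proof -
  have l0: "l1 \<noteq> 0" using hl1 by auto
  have m0: "m1 \<noteq> 0" using hm1 by auto
  define C where "C = dual_complex (cnj l1 / of_real (cmod l1)) 0"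
  define E where "E = 1 - dual_complex 0 (\<i> * of_real (Im (l2 * cnj l1 / of_real ((cmod l1)\<^sup>2))))"
  define C' where "C' = dual_complex (cnj m1 / of_real (cmod m1)) 0"
  define E' where "E' = 1 - dual_complex 0 (\<i> * of_real (Im (m2 * cnj m1 / of_real ((cmod m1)\<^sup>2))))"
  define L where "L = dual_complex l1 l2"
  define M where "M = dual_complex m1 m2"
  define N where "N = dual_complex (of_real (cmod l1)) (of_real (Re (l2 * cnj l1) / cmod l1))"
  define N' where "N' = dual_complex (of_real (cmod m1)) (of_real (Re (m2 * cnj m1) / cmod m1))"
  have uC: "unit_dq C" unfolding C_def by (rule C_unit[OF l0])
  have uC': "unit_dq C'" unfolding C'_def by (rule C_unit[OF m0])
  have uE: "unit_dq E" unfolding E_def by (rule E_unit)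
  have uE': "unit_dq E'" unfolding E'_def by (rule E_unit)
  have Qm: "Q m = dqcnj x * (C * (E * (m * y)))" for m by (simp add: Q_def C_def E_def mult.assoc)
  have Pm: "P m = dqcnj x * (m * (E' * (C' * y)))" for m by (simp add: P_def C'_def E'_def mult.assoc)
  have a': "a = dqcnj x * (L * x)" by (simp add: a L_def mult.assoc)
  have b': "b = dqcnj y * (M * y)" by (simp add: b M_def mult.assoc)
  have F1': "L * (C * (E * z)) = N * z" for z
    using F1[OF l0, of l2] by (simp add: L_def C_def E_def N_def mult.assoc[symmetric])
  have F2': "E' * (C' * (M * z)) = N' * z" for z
    using F2[OF m0, of m2] by (simp add: M_def C'_def E'_def N'_def mult.assoc[symmetric])
  have Ncomm: "N * z = z * N" for z unfolding N_def by (rule dc_real_comm)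
  have N'comm: "N' * z = z * N'" for z unfolding N'_def by (rule dc_real_comm)
  have LL: "L * dqcnj L = dual_complex (of_real ((cmod l1)^2)) (of_real (2 * Re (l2 * cnj l1)))"
    unfolding L_def by (rule F4)
  have MM: "M * dqcnj M = dual_complex (of_real ((cmod m1)^2)) (of_real (2 * Re (m2 * cnj m1)))"
    unfolding M_def by (rule F4)
  have NN: "N = N'"
  proof -
    obtain q p where q: "unit_dq q" and p: "unit_dq p" and e: "a * q = p * b" using ex by blast
    define u where "u = x * (q * dqcnj y)"
    define v where "v = x * (p * dqcnj y)"
    have uu: "unit_dq u" unfolding u_def by (intro unit_mult unit_cnj x y q)
    have uv: "unit_dq v" unfolding v_def by (intro unit_mult unit_cnj x y p)
    have "x * (a * (q * dqcnj y)) = x * (p * (b * dqcnj y))" using e by (simp add: mult.assoc[symmetric])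
    then have Luv: "L * u = v * M" unfolding a' b' u_def v_def
      by (simp add: mult.assoc unit_simps[OF x] unit_simps[OF y])
    have "L * dqcnj L = (L * u) * dqcnj (L * u)"
      by (simp add: dqcnj_mult mult.assoc unit_simps[OF uu])
    also have "\<dots> = v * (M * dqcnj M) * dqcnj v" by (simp add: Luv dqcnj_mult mult.assoc)
    also have "\<dots> = M * dqcnj M" unfolding MM
      by (subst dc_real_comm[symmetric]) (simp only: mult.assoc unit_simps[OF uv] mult_1_right)
    finally have "L * dqcnj L = M * dqcnj M" .
    then have "complex_of_real ((cmod l1)^2) = of_real ((cmod m1)^2) \<and>
       complex_of_real (2 * Re (l2 * cnj l1)) = of_real (2 * Re (m2 * cnj m1))"
      unfolding LL MM by (rule dc_inj)
    then have "(cmod l1)^2 = (cmod m1)^2 \<and> 2 * Re (l2 * cnj l1) = 2 * Re (m2 * cnj m1)"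
      by (simp only: of_real_eq_iff)
    then have "cmod l1 = cmod m1" "Re (l2 * cnj l1) = Re (m2 * cnj m1)"
      by (auto simp only: power2_eq_iff_nonneg norm_ge_zero mult_left_cancel zero_neq_numeral)
    then show ?thesis unfolding N_def N'_def by simp
  qed
  define Ni where "Ni = dual_complex (of_real (1 / cmod l1)) (of_real (- (Re (l2 * cnj l1) / cmod l1) / (cmod l1)^2))"
  have NiN: "Ni * (N * z) = z" for z
  proof -
    have "Ni * N = 1" unfolding Ni_def N_def dc_mult dc_one using l0
      by (simp add: field_simps power2_eq_square flip: of_real_mult of_real_add)
    then show ?thesis by (simp add: mult.assoc[symmetric])
  qed
  have Ncancel: "N * z = N * z' \<Longrightarrow> z = z'" for z z' by (metis NiN)
  show ?thesis
  proof (rule set_eqI, rule iffI)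
    fix qp assume "qp \<in> {(q, p). unit_dq q \<and> unit_dq p \<and> a * q = p * b}"
    then obtain q p where qp: "qp = (q, p)" and q: "unit_dq q" and p: "unit_dq p" and e: "a * q = p * b"
      by blast
    define m where "m = dqcnj E * (dqcnj C * (x * (q * dqcnj y)))"
    have um: "unit_dq m" unfolding m_def by (intro unit_mult unit_cnj x y q uC uE)
    have "Q m = q" unfolding Qm m_def
      by (simp add: mult.assoc unit_simps[OF x] unit_simps[OF y] unit_simps[OF uC] unit_simps[OF uE])
    moreover have "P m = p"
    proof -
      define u where "u = x * (q * dqcnj y)"
      define v where "v = x * (p * dqcnj y)"
      have "x * (a * (q * dqcnj y)) = x * (p * (b * dqcnj y))" using e by (simp add: mult.assoc[symmetric])
      then have Luv: "L * u = v * M" unfolding a' b' u_def v_def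
        by (simp add: mult.assoc unit_simps[OF x] unit_simps[OF y])
      have L': "L = N * (dqcnj E * dqcnj C)"
      proof -
        have "L = L * (C * (E * (dqcnj E * dqcnj C)))"
          by (simp add: unit_simps[OF uC] unit_simps[OF uE])
        also have "\<dots> = N * (dqcnj E * dqcnj C)" by (rule F1')
        finally show ?thesis .
      qed
      have M': "M = dqcnj C' * (dqcnj E' * N')"
      proof -
        have "M = dqcnj C' * (dqcnj E' * (E' * (C' * (M * 1))))"
          by (simp add: unit_simps[OF uC'] unit_simps[OF uE'])
        also have "\<dots> = dqcnj C' * (dqcnj E' * N')" by (simp only: F2') simp
        finally show ?thesis .
      qed
      have "N * (dqcnj E * (dqcnj C * u)) = N * (v * (dqcnj C' * dqcnj E'))"
      proof -
        have "N * (dqcnj E * (dqcnj C * u)) = L * u" unfolding L' by (simp add: mult.assoc)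
        also have "\<dots> = v * M" by (rule Luv)
        also have "\<dots> = v * (dqcnj C' * dqcnj E') * N" unfolding M' NN by (simp add: mult.assoc)
        also have "\<dots> = N * (v * (dqcnj C' * dqcnj E'))" by (rule Ncomm[symmetric])
        finally show ?thesis .
      qed
      then have key: "dqcnj E * (dqcnj C * u) = v * (dqcnj C' * dqcnj E')" by (rule Ncancel)
      have "P m = dqcnj x * ((dqcnj E * (dqcnj C * u)) * (E' * (C' * y)))"
        unfolding Pm m_def u_def by (simp add: mult.assoc)
      also have "\<dots> = dqcnj x * (v * y)" unfolding key
        by (simp add: mult.assoc unit_simps[OF uC'] unit_simps[OF uE'])
      also have "\<dots> = p" unfolding v_def
        by (simp add: mult.assoc unit_simps[OF x] unit_simps[OF y])
      finally show ?thesis .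
    qed
    ultimately show "qp \<in> {(Q m, P m) | m. unit_dq m}" using qp um by blast
  next
    fix qp assume "qp \<in> {(Q m, P m) | m. unit_dq m}"
    then obtain m where qp: "qp = (Q m, P m)" and um: "unit_dq m" by blast
    have "unit_dq (Q m)" unfolding Qm by (intro unit_mult unit_cnj x y um uC uE)
    moreover have "unit_dq (P m)" unfolding Pm by (intro unit_mult unit_cnj x y um uC' uE')
    moreover have "a * Q m = P m * b"
    proof -
      have "a * Q m = dqcnj x * (N * (m * y))" unfolding a' Qm
        by (simp add: mult.assoc unit_simps[OF x] F1')
      also have "\<dots> = dqcnj x * (m * (N' * y))" unfolding NN by (simp add: Ncomm[of m, unfolded NN] mult.assoc[symmetric])
      also have "\<dots> = P m * b" unfolding Pm b'
        by (simp add: mult.assoc unit_simps[OF y] F2')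
      finally show ?thesis .
    qed
    ultimately show "qp \<in> {(q, p). unit_dq q \<and> unit_dq p \<and> a * q = p * b}" using qp by blast
  qed
qed

end
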